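(* Let $P$ be a minimal Fano polytope in $\mathbb{R}^3$ with vertex set $\{x_1,x_2,x_3,y_1,-y_1\}$ such that $x_1,x_2,x_3$ are the vertices of a Fano triangle. Then, up to the action of $GL(3,\mathbb{Z})$, $P$ is the convex hull of either $\{(1,0,0),(0,1,0),(-1,-1,0),(0,0,1),(0,0,-1)\}$ or $\{(1,0,0),(0,1,0),(-1,-1,0),(1,2,3),(-1,-2,-3)\}$.
   Context: A Fano polytope is a convex polytope $P\subset\mathbb{R}^3$ with vertices in $\mathbb{Z}^3$ such that the only lattice point of $P$ that is not a vertex is the origin, which lies strictly in the interior of $P$. A Fano polytope with vertex set $\{x_1,\ldots,x_k\}$ is minimal if for every $j$ the convex hull of $\{x_1,\ldots,x_k\}\setminus\{x_j\}$ is not a Fano polytope. A Fano triangle is a triangle with vertices in $\mathbb{Z}^3$ lying in a plane through the origin, whose only lattice point other than its vertices is the origin, which lies in its relative interior. *)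

theory Defs
  imports "HOL-Analysis.Analysis"
begin

definition lattice_pt :: "real^3 \<Rightarrow> bool" where
  "lattice_pt x \<longleftrightarrow> (\<forall>i. x $ i \<in> \<int>)"

definition vertices :: "(real^3) set \<Rightarrow> (real^3) set" where
  "vertices P = {v. v extreme_point_of P}"

definition fano_polytope :: "(real^3) set \<Rightarrow> bool" where
  "fano_polytope P \<longleftrightarrow>
     polytope P \<and> (\<forall>v\<in>vertices P. lattice_pt v) \<and> 0 \<in> interior P \<and>
     {x \<in> P. lattice_pt x} = insert 0 (vertices P)"

definition fano_triangle :: "real^3 \<Rightarrow> real^3 \<Rightarrow> real^3 \<Rightarrow> bool" where
  "fano_triangle a b c \<longleftrightarrow>
     lattice_pt a \<and> lattice_pt b \<and> lattice_pt c \<and> \<not> collinear {a, b, c} \<and>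
     0 \<in> affine hull {a, b, c} \<and>
     0 \<in> rel_interior (convex hull {a, b, c}) \<and>
     {x \<in> convex hull {a, b, c}. lattice_pt x} = {a, b, c, 0}"

definition GL3Z :: "(real^3^3) set" where
  "GL3Z = {M. (\<forall>i j. M $ i $ j \<in> \<int>) \<and> \<bar>det M\<bar> = 1}"

end

theory Submission
  imports Defs
begin

lemma conv4:
  fixes C :: "'a::real_vector set"
  assumes "convex C" "a\<in>C" "b\<in>C" "c\<in>C" "d\<in>C" "u\<ge>0" "v\<ge>0" "w\<ge>0" "t\<ge>0" "u+v+w+t=1"
  shows "u *\<^sub>R a + v *\<^sub>R b + w *\<^sub>R c + t *\<^sub>R d \<in> C"
proof -
  let ?f = "\<lambda>i::nat. if i=0 then u else if i=1 then v else if i=2 then w else t"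
  let ?g = "\<lambda>i::nat. if i=0 then a else if i=1 then b else if i=2 then c else d"
  have "(\<Sum>i\<in>{0::nat,1,2,3}. ?f i *\<^sub>R ?g i) \<in> C"
    by (rule convex_sum) (use assms in auto)
  then show ?thesis by (simp add: algebra_simps)
qed

definition det3 :: "real^3 \<Rightarrow> real^3 \<Rightarrow> real^3 \<Rightarrow> real" where
  "det3 u v w = u$1*(v$2*w$3 - v$3*w$2) - u$2*(v$1*w$3 - v$3*w$1) + u$3*(v$1*w$2 - v$2*w$1)"

lemma det3_lin1: "det3 (a *\<^sub>R x + b *\<^sub>R y) v w = a * det3 x v w + b * det3 y v w"
  by (simp add: det3_def algebra_simps)
lemma det3_lin2: "det3 u (a *\<^sub>R x + b *\<^sub>R y) w = a * det3 u x w + b * det3 u y w"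
  by (simp add: det3_def algebra_simps)
lemma det3_lin3: "det3 u v (a *\<^sub>R x + b *\<^sub>R y) = a * det3 u v x + b * det3 u v y"
  by (simp add: det3_def algebra_simps)

lemma cramer:
  assumes "det3 u v w \<noteq> 0"
  shows "p = (det3 p v w / det3 u v w) *\<^sub>R u + (det3 u p w / det3 u v w) *\<^sub>R v + (det3 u v p / det3 u v w) *\<^sub>R w"
proof -
  have "det3 u v w *\<^sub>R p = det3 p v w *\<^sub>R u + det3 u p w *\<^sub>R v + det3 u v p *\<^sub>R w"
    by (simp add: vec_eq_iff forall_3 det3_def algebra_simps)
  then show ?thesis using assms
    by (simp add: vec_eq_iff forall_3 field_simps)
qed

lemma coords_unique:
  assumes "det3 u v w \<noteq> 0" "p = a *\<^sub>R u + b *\<^sub>R v + c *\<^sub>R w"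
  shows "a = det3 p v w / det3 u v w" "b = det3 u p w / det3 u v w" "c = det3 u v p / det3 u v w"
proof -
  have "det3 p v w = a * det3 u v w" "det3 u p w = b * det3 u v w" "det3 u v p = c * det3 u v w"
    using assms(2) by (simp_all add: det3_def algebra_simps)
  then show "a = det3 p v w / det3 u v w" "b = det3 u p w / det3 u v w" "c = det3 u v p / det3 u v w"
    using assms(1) by simp_all
qed

lemma uniq2:
  assumes "det3 u v w \<noteq> 0" "a *\<^sub>R u + b *\<^sub>R v = a' *\<^sub>R u + b' *\<^sub>R v"
  shows "a = a' \<and> b = b'"
proof -
  have "det3 (a *\<^sub>R u + b *\<^sub>R v) v w = det3 (a' *\<^sub>R u + b' *\<^sub>R v) v w"
       "det3 u (a *\<^sub>R u + b *\<^sub>R v) w = det3 u (a' *\<^sub>R u + b' *\<^sub>R v) w" using assms(2) by simp_all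
  then have "a * det3 u v w = a' * det3 u v w" "b * det3 u v w = b' * det3 u v w"
    by (simp_all add: det3_def algebra_simps)
  then show ?thesis using assms(1) by simp
qed

lemma lattice_comb:
  assumes "lattice_pt u" "lattice_pt v" "a \<in> \<int>" "b \<in> \<int>"
  shows "lattice_pt (a *\<^sub>R u + b *\<^sub>R v)"
  using assms by (simp add: lattice_pt_def)

lemma lattice_comb3:
  assumes "lattice_pt u" "lattice_pt v" "lattice_pt w" "a \<in> \<int>" "b \<in> \<int>" "c \<in> \<int>"
  shows "lattice_pt (a *\<^sub>R u + b *\<^sub>R v + c *\<^sub>R w)"
  using assms by (simp add: lattice_pt_def)

lemma lattice_diff: "lattice_pt u \<Longrightarrow> lattice_pt v \<Longrightarrow> lattice_pt (u - v)"
  by (simp add: lattice_pt_def)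
lemma lattice_add: "lattice_pt u \<Longrightarrow> lattice_pt v \<Longrightarrow> lattice_pt (u + v)"
  by (simp add: lattice_pt_def)
lemma lattice_neg: "lattice_pt u \<Longrightarrow> lattice_pt (- u)"
  by (simp add: lattice_pt_def)
lemma lattice_zero: "lattice_pt 0"
  by (simp add: lattice_pt_def)

lemma lemmaL:
  assumes d: "det3 u v w \<noteq> 0" and lu: "lattice_pt u" and lv: "lattice_pt v" and k: "k1 > 0" "k2 > 0"
  and H: "\<And>q. lattice_pt q \<Longrightarrow> q \<in> convex hull {0,u,v} \<Longrightarrow>
             q = 0 \<or> q = u \<or> q = v \<or> q = (-k1) *\<^sub>R u + (-k2) *\<^sub>R v"
  and lp: "lattice_pt p" and p: "p = s *\<^sub>R u + t *\<^sub>R v"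
  shows "s \<in> \<int> \<and> t \<in> \<int>"
proof -
  define s' where "s' = frac s"
  define t' where "t' = frac t"
  have s'r: "0 \<le> s'" "s' < 1" and t'r: "0 \<le> t'" "t' < 1"
    by (simp_all add: s'_def t'_def frac_lt_1)
  define q where "q = s' *\<^sub>R u + t' *\<^sub>R v"
  have "q = p - (of_int \<lfloor>s\<rfloor> *\<^sub>R u + of_int \<lfloor>t\<rfloor> *\<^sub>R v)"
    by (simp add: q_def p s'_def t'_def frac_def algebra_simps)
  then have lq: "lattice_pt q"
    by (simp add: lattice_diff lattice_comb lp lu lv)
  have z: "s' = 0 \<and> t' = 0"
  proof (cases "s' + t' \<le> 1")
    case True
    have "q \<in> convex hull {0,u,v}"
      unfolding convex_hull_3
      by (rule CollectI, rule exI[of _ "1 - s' - t'"], rule exI[of _ s'], rule exI[of _ t'])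
         (use True s'r t'r in \<open>simp add: q_def\<close>)
    then have "q = 0 \<or> q = u \<or> q = v \<or> q = (-k1) *\<^sub>R u + (-k2) *\<^sub>R v" using H lq by blast
    then show ?thesis
    proof (elim disjE)
      assume "q = 0"
      then have "s' *\<^sub>R u + t' *\<^sub>R v = 0 *\<^sub>R u + 0 *\<^sub>R v" by (simp add: q_def)
      from uniq2[OF d this] show ?thesis by linarith
    next
      assume "q = u"
      then have "s' *\<^sub>R u + t' *\<^sub>R v = 1 *\<^sub>R u + 0 *\<^sub>R v" by (simp add: q_def)
      from uniq2[OF d this] show ?thesis using s'r by linarith
    next
      assume "q = v"
      then have "s' *\<^sub>R u + t' *\<^sub>R v = 0 *\<^sub>R u + 1 *\<^sub>R v" by (simp add: q_def)
      from uniq2[OF d this] show ?thesis using t'r by linarith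
    next
      assume "q = (-k1) *\<^sub>R u + (-k2) *\<^sub>R v"
      then have "s' *\<^sub>R u + t' *\<^sub>R v = (-k1) *\<^sub>R u + (-k2) *\<^sub>R v" by (simp add: q_def)
      from uniq2[OF d this] show ?thesis using s'r k by linarith
    qed
  next
    case False
    define q' where "q' = (1 - s') *\<^sub>R u + (1 - t') *\<^sub>R v"
    have "q' = (u + v) - q" by (simp add: q_def q'_def algebra_simps)
    then have lq': "lattice_pt q'" by (simp add: lattice_diff lattice_add lq lu lv)
    have "q' \<in> convex hull {0,u,v}"
      unfolding convex_hull_3
      by (rule CollectI, rule exI[of _ "s' + t' - 1"], rule exI[of _ "1 - s'"], rule exI[of _ "1 - t'"])
         (use False s'r t'r in \<open>simp add: q'_def\<close>)
    then have "q' = 0 \<or> q' = u \<or> q' = v \<or> q' = (-k1) *\<^sub>R u + (-k2) *\<^sub>R v" using H lq' by blast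
    then show ?thesis
    proof (elim disjE)
      assume "q' = 0"
      then have "(1 - s') *\<^sub>R u + (1 - t') *\<^sub>R v = 0 *\<^sub>R u + 0 *\<^sub>R v" by (simp add: q'_def)
      from uniq2[OF d this] show ?thesis using s'r by linarith
    next
      assume "q' = u"
      then have "(1 - s') *\<^sub>R u + (1 - t') *\<^sub>R v = 1 *\<^sub>R u + 0 *\<^sub>R v" by (simp add: q'_def)
      from uniq2[OF d this] show ?thesis using t'r by linarith
    next
      assume "q' = v"
      then have "(1 - s') *\<^sub>R u + (1 - t') *\<^sub>R v = 0 *\<^sub>R u + 1 *\<^sub>R v" by (simp add: q'_def)
      from uniq2[OF d this] show ?thesis using s'r by linarith
    next
      assume "q' = (-k1) *\<^sub>R u + (-k2) *\<^sub>R v"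
      then have "(1 - s') *\<^sub>R u + (1 - t') *\<^sub>R v = (-k1) *\<^sub>R u + (-k2) *\<^sub>R v" by (simp add: q'_def)
      from uniq2[OF d this] show ?thesis using s'r k by linarith
    qed
  qed
  then show ?thesis by (simp add: s'_def t'_def frac_eq_0_iff)
qed

lemma pos_int_ge1: "x \<in> \<int> \<Longrightarrow> 0 < x \<Longrightarrow> (1::real) \<le> x"
  by (elim Ints_cases) simp

definition crossv :: "real^3 \<Rightarrow> real^3 \<Rightarrow> real^3" where
  "crossv x y = vector [x$2*y$3 - x$3*y$2, x$3*y$1 - x$1*y$3, x$1*y$2 - x$2*y$1]"

lemma det3_crossv: "det3 x y (crossv x y) = (x$2*y$3 - x$3*y$2)^2 + (x$3*y$1 - x$1*y$3)^2 + (x$1*y$2 - x$2*y$1)^2"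
  by (simp add: det3_def crossv_def power2_eq_square algebra_simps)

lemma coll_mult: "x1 = a *\<^sub>R v \<Longrightarrow> x2 = b *\<^sub>R v \<Longrightarrow> x3 = c *\<^sub>R v \<Longrightarrow> collinear {x1,x2,x3}"
  unfolding collinear_alt by (rule exI[of _ 0], rule exI[of _ v]) auto

lemma indep_from_noncollinear:
  fixes x1 x2 x3 :: "real^3"
  assumes nc: "\<not> collinear {x1,x2,x3}" and x3: "x3 = (-k1) *\<^sub>R x1 + (-k2) *\<^sub>R x2"
  shows "det3 x1 x2 (crossv x1 x2) \<noteq> 0"
proof
  assume "det3 x1 x2 (crossv x1 x2) = 0"
  then have n: "x1$2*x2$3 - x1$3*x2$2 = 0" "x1$3*x2$1 - x1$1*x2$3 = 0" "x1$1*x2$2 - x1$2*x2$1 = 0"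
    unfolding det3_crossv by (simp_all add: sum_power2_eq_zero_iff add_nonneg_eq_0_iff)
  have "collinear {x1,x2,x3}"
  proof (cases "x1 = 0")
    case True
    show ?thesis
      by (rule coll_mult[of _ 0 x2 _ 1 _ "-k2"]) (use True x3 in auto)
  next
    case False
    define S where "S = x1$1*x1$1 + x1$2*x1$2 + x1$3*x1$3"
    define T where "T = x1$1*x2$1 + x1$2*x2$2 + x1$3*x2$3"
    have "S \<noteq> 0"
    proof
      assume "S = 0"
      then have "x1$1*x1$1 = 0 \<and> x1$2*x1$2 = 0 \<and> x1$3*x1$3 = 0" unfolding S_def
        using zero_le_square[of "x1$1"] zero_le_square[of "x1$2"] zero_le_square[of "x1$3"] by linarith
      then have "x1$1 = 0 \<and> x1$2 = 0 \<and> x1$3 = 0" by simp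
      then have "x1 = 0" by (simp add: vec_eq_iff forall_3)
      with False show False by simp
    qed
    have e1: "S * x2$1 - T * x1$1 = x1$3*(x1$3*x2$1 - x1$1*x2$3) - x1$2*(x1$1*x2$2 - x1$2*x2$1)"
     and e2: "S * x2$2 - T * x1$2 = x1$1*(x1$1*x2$2 - x1$2*x2$1) - x1$3*(x1$2*x2$3 - x1$3*x2$2)"
     and e3: "S * x2$3 - T * x1$3 = x1$2*(x1$2*x2$3 - x1$3*x2$2) - x1$1*(x1$3*x2$1 - x1$1*x2$3)"
      by (simp_all add: S_def T_def algebra_simps)
    have "S *\<^sub>R x2 = T *\<^sub>R x1"
      using e1 e2 e3 n by (simp add: vec_eq_iff forall_3)
    then have x2: "x2 = (T/S) *\<^sub>R x1" using \<open>S \<noteq> 0\<close>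
      by (metis (no_types, lifting) divide_inverse_commute eq_vector_fraction_iff scaleR_scaleR)
    show ?thesis
      by (rule coll_mult[of _ 1 x1 _ "T/S" _ "-k1 - k2*(T/S)"]) (use x2 x3 in \<open>auto simp: algebra_simps\<close>)
  qed
  with nc show False by simp
qed

lemma tri:
  assumes ft: "fano_triangle x1 x2 x3"
  shows "x3 = - x1 - x2" "det3 x1 x2 (crossv x1 x2) \<noteq> 0"
    "\<And>p s t. lattice_pt p \<Longrightarrow> p = s *\<^sub>R x1 + t *\<^sub>R x2 \<Longrightarrow> s \<in> \<int> \<and> t \<in> \<int>"
proof -
  note F = ft[unfolded fano_triangle_def]
  have l1: "lattice_pt x1" and l2: "lattice_pt x2" and l3: "lattice_pt x3"
    and nc: "\<not> collinear {x1,x2,x3}" and ri: "0 \<in> rel_interior (convex hull {x1,x2,x3})"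
    and LP: "{x \<in> convex hull {x1, x2, x3}. lattice_pt x} = {x1, x2, x3, 0}"
    using F by auto
  have dist: "x1 \<noteq> x2" "x1 \<noteq> x3" "x2 \<noteq> x3" and ad: "\<not> affine_dependent {x1,x2,x3}"
    using nc collinear_3_eq_affine_dependent by blast+
  obtain u where u: "\<forall>x\<in>{x1,x2,x3}. 0 < u x" "sum u {x1,x2,x3} = 1"
      "(\<Sum>x\<in>{x1,x2,x3}. u x *\<^sub>R x) = 0"
    using ri unfolding rel_interior_convex_hull_explicit[OF ad] by auto
  define a where "a = u x1"
  define b where "b = u x2"
  define c where "c = u x3"
  have pos: "a > 0" "b > 0" "c > 0" using u(1) by (auto simp: a_def b_def c_def)
  have eq0: "a *\<^sub>R x1 + b *\<^sub>R x2 + c *\<^sub>R x3 = 0"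
    using u(3) dist by (simp add: a_def b_def c_def add.assoc)
  have eqc: "a * x1$i + b * x2$i + c * x3$i = 0" for i
  proof -
    have "(a *\<^sub>R x1 + b *\<^sub>R x2 + c *\<^sub>R x3)$i = (0::real^3)$i" using eq0 by simp
    then show ?thesis by simp
  qed
  have x3e: "x3 = (-(a/c)) *\<^sub>R x1 + (-(b/c)) *\<^sub>R x2"
  proof (subst vec_eq_iff, intro allI)
    fix i
    have "a * x1$i + b * x2$i + c * x3$i = 0" by (rule eqc)
    then show "x3$i = ((-(a/c)) *\<^sub>R x1 + (-(b/c)) *\<^sub>R x2)$i" using pos by (simp add: field_simps, (simp add: algebra_simps)?)
  qed
  have x1e: "x1 = (-(b/a)) *\<^sub>R x2 + (-(c/a)) *\<^sub>R x3"
  proof (subst vec_eq_iff, intro allI)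
    fix i
    have "a * x1$i + b * x2$i + c * x3$i = 0" by (rule eqc)
    then show "x1$i = ((-(b/a)) *\<^sub>R x2 + (-(c/a)) *\<^sub>R x3)$i" using pos by (simp add: field_simps, (simp add: algebra_simps)?)
  qed
  have x2e: "x2 = (-(c/b)) *\<^sub>R x3 + (-(a/b)) *\<^sub>R x1"
  proof (subst vec_eq_iff, intro allI)
    fix i
    have "a * x1$i + b * x2$i + c * x3$i = 0" by (rule eqc)
    then show "x2$i = ((-(c/b)) *\<^sub>R x3 + (-(a/b)) *\<^sub>R x1)$i" using pos by (simp add: field_simps, (simp add: algebra_simps)?)
  qed
  define w where "w = crossv x1 x2"
  have d12: "det3 x1 x2 w \<noteq> 0" unfolding w_def by (rule indep_from_noncollinear[OF nc x3e])
  have "det3 x2 x3 w = (a/c) * det3 x1 x2 w" by (subst x3e) (simp add: det3_def algebra_simps)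
  then have d23: "det3 x2 x3 w \<noteq> 0" using d12 pos by simp
  have "det3 x3 x1 w = (b/c) * det3 x1 x2 w" by (subst x3e) (simp add: det3_def algebra_simps)
  then have d31: "det3 x3 x1 w \<noteq> 0" using d12 pos by simp
  have z0: "0 \<in> convex hull {x1,x2,x3}" using ri rel_interior_subset by blast
  have sub: "\<And>p q. p \<in> {x1,x2,x3} \<Longrightarrow> q \<in> {x1,x2,x3} \<Longrightarrow> convex hull {0,p,q} \<subseteq> convex hull {x1,x2,x3}"
    by (rule hull_minimal) (use z0 in \<open>auto intro: convex_convex_hull hull_inc\<close>)
  have LP': "\<And>p q r. p \<in> {x1,x2,x3} \<Longrightarrow> q \<in> {x1,x2,x3} \<Longrightarrow> lattice_pt r \<Longrightarrow> r \<in> convex hull {0,p,q}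
      \<Longrightarrow> r \<in> {x1,x2,x3,0}"
    using sub LP by blast
  have A12: "\<And>p s t. lattice_pt p \<Longrightarrow> p = s *\<^sub>R x1 + t *\<^sub>R x2 \<Longrightarrow> s \<in> \<int> \<and> t \<in> \<int>"
    by (rule lemmaL[OF d12 l1 l2, of "a/c" "b/c"]) (use pos LP'[of x1 x2] x3e in auto)
  have A23: "\<And>p s t. lattice_pt p \<Longrightarrow> p = s *\<^sub>R x2 + t *\<^sub>R x3 \<Longrightarrow> s \<in> \<int> \<and> t \<in> \<int>"
    by (rule lemmaL[OF d23 l2 l3, of "b/a" "c/a"]) (use pos LP'[of x2 x3] x1e in auto)
  have A31: "\<And>p s t. lattice_pt p \<Longrightarrow> p = s *\<^sub>R x3 + t *\<^sub>R x1 \<Longrightarrow> s \<in> \<int> \<and> t \<in> \<int>"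
    by (rule lemmaL[OF d31 l3 l1, of "c/b" "a/b"]) (use pos LP'[of x3 x1] x2e in auto)
  have i1: "a/c \<in> \<int>" "b/c \<in> \<int>" using A12[OF l3 x3e] by (simp_all add: minus_in_Ints_iff)
  have i2: "c/a \<in> \<int>" using A23[OF l1 x1e] by (simp_all add: minus_in_Ints_iff)
  have i3: "c/b \<in> \<int>" using A31[OF l2 x2e] by (simp_all add: minus_in_Ints_iff)
  have "1 \<le> a/c" "1 \<le> c/a" "1 \<le> b/c" "1 \<le> c/b"
    by (rule pos_int_ge1, use pos i1 i2 i3 in simp, use pos in simp)+
  then have "a = c" "b = c" using pos by (simp_all add: field_simps)
  then show "x3 = - x1 - x2" using x3e pos by simp
  show "det3 x1 x2 (crossv x1 x2) \<noteq> 0" using d12 w_def by simp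
  show "\<And>p s t. lattice_pt p \<Longrightarrow> p = s *\<^sub>R x1 + t *\<^sub>R x2 \<Longrightarrow> s \<in> \<int> \<and> t \<in> \<int>" by (rule A12)
qed

definition good_basis :: "real^3 \<Rightarrow> real^3 \<Rightarrow> real^3 \<Rightarrow> bool" where
  "good_basis u v w \<longleftrightarrow> det3 u v w \<noteq> 0 \<and> lattice_pt u \<and> lattice_pt v \<and> lattice_pt w \<and>
     (\<forall>p. lattice_pt p \<longrightarrow> det3 p v w / det3 u v w \<in> \<int> \<and> det3 u p w / det3 u v w \<in> \<int> \<and>
        det3 u v p / det3 u v w \<in> \<int>)"

lemma int_mult_eq_1: "(x::real) \<in> \<int> \<Longrightarrow> y \<in> \<int> \<Longrightarrow> x * y = 1 \<Longrightarrow> \<bar>x\<bar> = 1"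
proof (elim Ints_cases)
  fix m n :: int assume "x = of_int m" "y = of_int n" "x * y = 1"
  then have "m * n = 1" by (metis of_int_eq_1_iff of_int_mult)
  then have "\<bar>m\<bar> = 1" using zmult_eq_1_iff by auto
  then show "\<bar>x\<bar> = 1" using \<open>x = of_int m\<close> by simp
qed

lemma good_basis_M:
  assumes gb: "good_basis u v w"
  shows "\<exists>M\<in>GL3Z. M *v u = vector [1,0,0] \<and> M *v v = vector [0,1,0] \<and> M *v w = vector [0,0,1]"
proof -
  define d where "d = det3 u v w"
  have d: "d \<noteq> 0" and lu: "lattice_pt u" and lv: "lattice_pt v" and lw: "lattice_pt w"
    and I: "\<And>p. lattice_pt p \<Longrightarrow> det3 p v w / d \<in> \<int> \<and> det3 u p w / d \<in> \<int> \<and> det3 u v p / d \<in> \<int>"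
    using gb by (auto simp: good_basis_def d_def)
  define co where "co = (\<lambda>(i::3) p. if i = 1 then det3 p v w / d else if i = 2 then det3 u p w / d else det3 u v p / d)"
  define M :: "real^3^3" where "M = (\<chi> i j. co i (axis j 1))"
  have Mv: "M *v p = vector [det3 p v w / d, det3 u p w / d, det3 u v p / d]" for p
    by (simp add: vec_eq_iff forall_3 M_def matrix_vector_mult_def sum_3 co_def det3_def axis_def
        add_divide_distrib diff_divide_distrib algebra_simps)
  have Mu: "M *v u = vector [1,0,0]" "M *v v = vector [0,1,0]" "M *v w = vector [0,0,1]"
    using d unfolding Mv d_def by (simp_all add: det3_def algebra_simps)
  have lax: "lattice_pt (axis j 1)" for j by (simp add: lattice_pt_def axis_def)
  have Mint: "M$i$j \<in> \<int>" for i j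
    using I[OF lax[of j]] exhaust_3[of i] by (auto simp: M_def co_def)
  define A :: "real^3^3" where "A = (\<chi> i j. if j = 1 then u$i else if j = 2 then v$i else w$i)"
  have Aint: "A$i$j \<in> \<int>" for i j
    using lu lv lw exhaust_3[of j] unfolding lattice_pt_def A_def by auto
  have Av: "A *v x = x$1 *\<^sub>R u + x$2 *\<^sub>R v + x$3 *\<^sub>R w" for x
    by (simp add: vec_eq_iff forall_3 A_def matrix_vector_mult_def sum_3 algebra_simps)
  have "M ** A = mat 1"
  proof (subst matrix_eq, intro allI)
    fix x :: "real^3"
    show "(M ** A) *v x = mat 1 *v x"
      unfolding matrix_vector_mul_assoc[symmetric] Av Mv using d
      by (simp add: vec_eq_iff forall_3 d_def det3_def field_simps)
  qed
  then have "det M * det A = 1" by (metis det_I det_mul)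
  moreover have "det M \<in> \<int>" unfolding det_3 using Mint by (simp add: Ints_mult Ints_add Ints_diff)
  moreover have "det A \<in> \<int>" unfolding det_3 using Aint by (simp add: Ints_mult Ints_add Ints_diff)
  ultimately have "\<bar>det M\<bar> = 1" using int_mult_eq_1 by blast
  then have "M \<in> GL3Z" using Mint by (simp add: GL3Z_def)
  then show ?thesis using Mu by blast
qed

lemma det3_expand3: "det3 a b p = (a$2*b$3 - a$3*b$2) * p$1 + (a$3*b$1 - a$1*b$3) * p$2 + (a$1*b$2 - a$2*b$1) * p$3"
  by (simp add: det3_def algebra_simps)

lemma exists_z:
  assumes l1: "lattice_pt x1" and l2: "lattice_pt x2" and d0: "det3 x1 x2 w0 \<noteq> 0"
    and H12: "\<And>p s t. lattice_pt p \<Longrightarrow> p = s *\<^sub>R x1 + t *\<^sub>R x2 \<Longrightarrow> s \<in> \<int> \<and> t \<in> \<int>"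
  shows "\<exists>z. good_basis x1 x2 z"
proof -
  have "x1$2*x2$3 - x1$3*x2$2 \<in> \<int>" "x1$3*x2$1 - x1$1*x2$3 \<in> \<int>" "x1$1*x2$2 - x1$2*x2$1 \<in> \<int>"
    using l1 l2 unfolding lattice_pt_def by (simp_all add: Ints_mult Ints_diff)
  then obtain m1 m2 m3 :: int where m: "x1$2*x2$3 - x1$3*x2$2 = of_int m1"
      "x1$3*x2$1 - x1$1*x2$3 = of_int m2" "x1$1*x2$2 - x1$2*x2$1 = of_int m3"
    by (metis Ints_cases)
  have dp: "det3 x1 x2 p = of_int m1 * p$1 + of_int m2 * p$2 + of_int m3 * p$3" for p
    unfolding det3_expand3 m ..
  define g where "g = gcd (gcd m1 m2) m3"
  have "\<not> (m1 = 0 \<and> m2 = 0 \<and> m3 = 0)" using d0 dp[of w0] by auto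
  then have g0: "g \<noteq> 0" by (simp add: g_def)
  obtain r1 r2 where uv: "r1 * m1 + r2 * m2 = gcd m1 m2" using bezout_int by blast
  obtain r3 r4 where uv': "r3 * gcd m1 m2 + r4 * m3 = g" using bezout_int g_def by blast
  define z :: "real^3" where "z = vector [of_int (r3*r1), of_int (r3*r2), of_int r4]"
  have lz: "lattice_pt z" by (simp add: lattice_pt_def z_def forall_3)
  have "det3 x1 x2 z = of_int (r3 * (r1 * m1 + r2 * m2) + r4 * m3)"
    unfolding dp by (simp add: z_def algebra_simps)
  then have dz: "det3 x1 x2 z = of_int g" using uv uv' by simp
  have gd: "g dvd m1" "g dvd m2" "g dvd m3" unfolding g_def
    by (meson dvd_trans gcd_dvd1 gcd_dvd2)+
  have G: "det3 x1 x2 p / det3 x1 x2 z \<in> \<int>" if lp: "lattice_pt p" for p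
  proof -
    have "det3 x1 x2 p / det3 x1 x2 z = of_int (m1 div g) * p$1 + of_int (m2 div g) * p$2 + of_int (m3 div g) * p$3"
      unfolding dz unfolding dp using gd g0
      by (simp add: add_divide_distrib of_int_div)
    then show ?thesis using lp unfolding lattice_pt_def by (simp add: Ints_mult Ints_add)
  qed
  have dz0: "det3 x1 x2 z \<noteq> 0" using dz g0 by simp
  have "det3 p x2 z / det3 x1 x2 z \<in> \<int> \<and> det3 x1 p z / det3 x1 x2 z \<in> \<int>" if lp: "lattice_pt p" for p
  proof -
    define ga where "ga = det3 x1 x2 p / det3 x1 x2 z"
    have gai: "ga \<in> \<int>" using G[OF lp] ga_def by simp
    define q where "q = p - ga *\<^sub>R z"
    have lq: "lattice_pt q" unfolding q_def
      using lattice_diff[OF lp lattice_comb[OF lz lz gai Ints_0]] by simp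
    have q: "q = (det3 q x2 z / det3 x1 x2 z) *\<^sub>R x1 + (det3 x1 q z / det3 x1 x2 z) *\<^sub>R x2 + (det3 x1 x2 q / det3 x1 x2 z) *\<^sub>R z"
      by (rule cramer[OF dz0])
    have "det3 x1 x2 q = det3 x1 x2 p - ga * det3 x1 x2 z" by (simp add: q_def det3_def algebra_simps)
    then have "det3 x1 x2 q = 0" using dz0 by (simp add: ga_def)
    moreover have "det3 q x2 z = det3 p x2 z" "det3 x1 q z = det3 x1 p z"
      by (simp_all add: q_def det3_def algebra_simps)
    ultimately have "q = (det3 p x2 z / det3 x1 x2 z) *\<^sub>R x1 + (det3 x1 p z / det3 x1 x2 z) *\<^sub>R x2"
      using q by simp
    then show ?thesis using H12[OF lq] by blast
  qed
  then have "good_basis x1 x2 z" using G dz0 l1 l2 lz by (simp add: good_basis_def)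
  then show ?thesis by blast
qed

lemma int_core:
  fixes a b c :: int
  assumes c: "c \<ge> 2"
  and K: "\<And>al be ga S T. 0 < \<bar>ga\<bar> \<Longrightarrow> \<bar>ga\<bar> < c \<Longrightarrow> S = c*al - ga*a \<Longrightarrow> T = c*be - ga*b \<Longrightarrow>
          S + T \<le> c - \<bar>ga\<bar> \<Longrightarrow> 2*S - T \<ge> -(c - \<bar>ga\<bar>) \<Longrightarrow> S - 2*T \<le> c - \<bar>ga\<bar> \<Longrightarrow> False"
  shows "c = 3 \<and> ((a mod 3 = 1 \<and> b mod 3 = 2) \<or> (a mod 3 = 2 \<and> b mod 3 = 1))"
proof -
  define a' where "a' = a mod c"
  define qa where "qa = a div c"
  define qb where "qb = b div c"
  have ae: "a = c*qa + a'" unfolding a'_def qa_def by simp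
  have be: "b = c*qb + (b mod c)" unfolding qb_def by simp
  define b' where "b' = b mod c"
  have be': "b = c*qb + b'" using be b'_def by simp
  have ar: "0 \<le> a'" "a' < c" using c by (simp_all add: a'_def)
  have br: "0 \<le> b'" "b' < c" using c by (simp_all add: b'_def)
  have s1: "c \<le> a' + b'"
  proof (rule ccontr)
    assume "\<not> c \<le> a' + b'"
    show False
      apply (rule K[where ga="-1" and al="-qa" and be="-qb" and S="a'" and T="b'"])
        apply (simp_all add: ae be' algebra_simps)
        apply ((use c ar br ae be' \<open>\<not> c \<le> a' + b'\<close> in linarith)+)?
        done
  qed
  have s2: "a' + b' = c"
  proof (rule ccontr)
    assume "a' + b' \<noteq> c"
    show False
      apply (rule K[where ga="1" and al="qa+1" and be="qb+1" and S="c - a'" and T="c - b'"])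
        apply (simp_all add: ae be' algebra_simps)
        apply ((use c ar br ae be' s1 \<open>a' + b' \<noteq> c\<close> in linarith)+)?
        done
  qed
  have s3: "3*a' = c \<or> 3*a' = 2*c"
  proof (rule ccontr)
    assume H: "\<not> (3*a' = c \<or> 3*a' = 2*c)"
    consider "c + 1 \<le> 3*a' \<and> 3*a' \<le> 2*c - 1" | "3*a' \<ge> 2*c + 1" | "3*a' \<le> c - 1" using H by linarith
    then show False
    proof cases
      case 1
      show False
        apply (rule K[where ga="1" and al="qa" and be="qb" and S="-a'" and T="-b'"])
        apply (simp_all add: ae be' algebra_simps)
        apply ((use c ar br ae be' s2 1 in linarith)+)?
        done
    next
      case 2
      show False
        apply (rule K[where ga="1" and al="qa+1" and be="qb" and S="c-a'" and T="-b'"])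
        apply (simp_all add: ae be' algebra_simps)
        apply ((use c ar br ae be' s2 2 in linarith)+)?
        done
    next
      case 3
      show False
        apply (rule K[where ga="1" and al="qa" and be="qb+1" and S="-a'" and T="c-b'"])
        apply (simp_all add: ae be' algebra_simps)
        apply ((use c ar br ae be' s2 3 in linarith)+)?
        done
    qed
  qed
  show ?thesis
  proof (cases "3*a' = c")
    case True
    have "a' = 1"
    proof (rule ccontr)
      assume "a' \<noteq> 1"
      then have "a' \<ge> 2" using True c by linarith
      show False
        apply (rule K[where ga="3" and al="3*qa+1" and be="3*qb+2" and S="0" and T="0"])
        apply (simp_all add: ae be' algebra_simps)
        apply ((use c ar br ae be' s2 True \<open>a' \<ge> 2\<close> in linarith)+)?
        done
    qed
    then have "c = 3" "a' = 1" "b' = 2" using True s2 by auto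
    then show ?thesis by (simp add: a'_def b'_def)
  next
    case False
    then have F: "3*a' = 2*c" using s3 by simp
    have "2 dvd a'" using F by presburger
    then obtain m where m2: "a' = 2*m" by (auto elim: dvdE)
    then have m: "c = 3*m" "a' = 2*m" using F by simp_all
    have "m = 1"
    proof (rule ccontr)
      assume "m \<noteq> 1"
      then have "m \<ge> 2" using m c by linarith
      show False
        apply (rule K[where ga="3" and al="3*qa+2" and be="3*qb+1" and S="0" and T="0"])
        apply (simp_all add: ae be' algebra_simps)
        apply ((use c ar br ae be' s2 m \<open>m \<ge> 2\<close> in linarith)+)?
        done
    qed
    then have "c = 3" "a' = 2" "b' = 1" using m s2 by auto
    then show ?thesis by (simp add: a'_def b'_def)
  qed
qed


lemma memP:
  fixes C :: "(real^3) set" and s t lam :: real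
  assumes C: "convex C" "x1 \<in> C" "x2 \<in> C" "-x1-x2 \<in> C" "y \<in> C" "-y \<in> C"
    and h: "s + t \<le> 1 - \<bar>lam\<bar>" "2 * s - t \<ge> -(1 - \<bar>lam\<bar>)" "s - 2 * t \<le> 1 - \<bar>lam\<bar>"
  shows "s *\<^sub>R x1 + t *\<^sub>R x2 + lam *\<^sub>R y \<in> C"
proof -
  define mu where "mu = 1 - \<bar>lam\<bar>"
  define p3 where "p3 = (mu - s - t)/3"
  define p1 where "p1 = (2 * s - t + mu)/3"
  define p2 where "p2 = (2 * t - s + mu)/3"
  define y' where "y' = (if lam \<ge> 0 then y else -y)"
  have y': "y' \<in> C" using C by (simp add: y'_def)
  have ly: "lam *\<^sub>R y = \<bar>lam\<bar> *\<^sub>R y'" by (simp add: y'_def)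
  have nn: "p1 \<ge> 0" "p2 \<ge> 0" "p3 \<ge> 0" using h by (simp_all add: p1_def p2_def p3_def mu_def)
  have sum1: "p1 + p2 + p3 + \<bar>lam\<bar> = 1" by (simp add: p1_def p2_def p3_def mu_def field_simps)
  have "p1 *\<^sub>R x1 + p2 *\<^sub>R x2 + p3 *\<^sub>R (-x1-x2) + \<bar>lam\<bar> *\<^sub>R y' \<in> C"
    by (rule conv4[OF C(1,2,3,4) y' nn]) (use sum1 in simp_all)
  moreover have "p1 *\<^sub>R x1 + p2 *\<^sub>R x2 + p3 *\<^sub>R (-x1-x2) = (p1 - p3) *\<^sub>R x1 + (p2 - p3) *\<^sub>R x2"
    by (simp add: algebra_simps)
  moreover have "p1 - p3 = s" "p2 - p3 = t" by (simp_all add: p1_def p2_def p3_def field_simps)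
  ultimately show ?thesis using ly by simp
qed

lemma good_basis_shear:
  assumes gb: "good_basis u v w" and k: "k1 \<in> \<int>" "k2 \<in> \<int>"
  shows "good_basis u v (k1 *\<^sub>R u + k2 *\<^sub>R v + w)"
proof -
  define w' where "w' = k1 *\<^sub>R u + k2 *\<^sub>R v + w"
  have d: "det3 u v w \<noteq> 0" and lu: "lattice_pt u" and lv: "lattice_pt v" and lw: "lattice_pt w"
    and I: "\<And>p. lattice_pt p \<Longrightarrow> det3 p v w / det3 u v w \<in> \<int> \<and> det3 u p w / det3 u v w \<in> \<int> \<and> det3 u v p / det3 u v w \<in> \<int>"
    using gb by (auto simp: good_basis_def)
  have dd: "det3 u v w' = det3 u v w" by (simp add: w'_def det3_def algebra_simps)
  have lw': "lattice_pt w'" unfolding w'_def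
    by (rule lattice_add[OF lattice_comb[OF lu lv k] lw])
  have "det3 p v w' / det3 u v w' \<in> \<int> \<and> det3 u p w' / det3 u v w' \<in> \<int> \<and> det3 u v p / det3 u v w' \<in> \<int>"
    if lp: "lattice_pt p" for p
  proof -
    define al where "al = det3 p v w / det3 u v w"
    define be where "be = det3 u p w / det3 u v w"
    define ga where "ga = det3 u v p / det3 u v w"
    have ints: "al \<in> \<int>" "be \<in> \<int>" "ga \<in> \<int>" using I[OF lp] by (simp_all add: al_def be_def ga_def)
    have "p = al *\<^sub>R u + be *\<^sub>R v + ga *\<^sub>R w" unfolding al_def be_def ga_def by (rule cramer[OF d])
    then have "p = (al - ga*k1) *\<^sub>R u + (be - ga*k2) *\<^sub>R v + ga *\<^sub>R w'"
      by (simp add: w'_def algebra_simps)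
    note cu = coords_unique[OF d[folded dd] this]
    show ?thesis unfolding cu[symmetric] using ints by (simp add: Ints_diff Ints_mult k)
  qed
  then show ?thesis using d dd lu lv lw' by (simp add: good_basis_def w'_def)
qed

lemma good_basis_swap:
  assumes gb: "good_basis u v w"
  shows "good_basis v u w"
proof -
  have e: "det3 v u w = - det3 u v w" "\<And>p. det3 p u w = - det3 u p w" "\<And>p. det3 v p w = - det3 p v w"
    "\<And>p. det3 v u p = - det3 u v p"
    by (simp_all add: det3_def algebra_simps)
  show ?thesis using gb unfolding good_basis_def e by auto
qed

lemma Mlin: fixes M :: "real^3^3" shows "M *v (a *\<^sub>R u + b *\<^sub>R v + c *\<^sub>R w) = a *\<^sub>R (M *v u) + b *\<^sub>R (M *v v) + c *\<^sub>R (M *v w)"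
  by (simp add: matrix_vector_right_distrib matrix_vector_mult_scaleR)


lemma Mneg: fixes M :: "real^3^3" shows "M *v (- x) = - (M *v x)"
  using matrix_vector_mult_diff_distrib[of M 0 x] by simp

lemma final_img:
  fixes M :: "real^3^3"
  assumes "P = convex hull {x1,x2,-x1-x2,y,-y}" "M *v x1 = e1" "M *v x2 = e2" "M *v y = Y"
  shows "(\<lambda>x. M *v x) ` P = convex hull {e1, e2, -e1-e2, Y, -Y}"
  unfolding assms(1) convex_hull_linear_image[OF matrix_vector_mul_linear]
  using assms(2-4) by (simp add: matrix_vector_mult_diff_distrib Mneg)

lemma convex_hyp: "convex {p. det3 x1 x2 p = 0}"
  unfolding convex_def by (auto simp: det3_lin3)

lemma int_eq_1_or_ge2: "(ci::int) > 0 \<Longrightarrow> ci = 1 \<or> ci \<ge> 2" by linarith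

theorem lemma4p4:
  fixes x1 x2 x3 y1 :: "real^3" and P :: "(real^3) set"
  assumes "fano_polytope P"
    and "vertices P = {x1, x2, x3, y1, -y1}"
    and "\<forall>v\<in>vertices P. \<not> fano_polytope (convex hull (vertices P - {v}))"
    and "fano_triangle x1 x2 x3"
  shows "\<exists>M\<in>GL3Z.
           (\<lambda>x. M *v x) ` P = convex hull {vector [1,0,0], vector [0,1,0], vector [-1,-1,0],
                                            vector [0,0,1], vector [0,0,-1]}
         \<or> (\<lambda>x. M *v x) ` P = convex hull {vector [1,0,0], vector [0,1,0], vector [-1,-1,0],
                                            vector [1,2,3], vector [-1,-2,-3]}"
proof -
  note F = assms(1)[unfolded fano_polytope_def]
  have polyP: "polytope P" and lv: "\<forall>v\<in>vertices P. lattice_pt v" and int0: "0 \<in> interior P"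
    and LPe: "{x \<in> P. lattice_pt x} = insert 0 (vertices P)" using F by auto
  have Pc: "P = convex hull (vertices P)" unfolding vertices_def
    using Krein_Milman_Minkowski[OF polytope_imp_compact[OF polyP] polytope_imp_convex[OF polyP]] by simp
  have P0: "P = convex hull {x1,x2,x3,y1,-y1}" using Pc assms(2) by simp
  have LP0: "\<And>p. lattice_pt p \<Longrightarrow> p \<in> P \<Longrightarrow> p \<in> {0,x1,x2,x3,y1,-y1}" using LPe assms(2) by blast
  have ly1: "lattice_pt y1" using lv assms(2) by auto
  have lx1: "lattice_pt x1" and lx2: "lattice_pt x2" using assms(4) by (simp_all add: fano_triangle_def)
  note T = tri[OF assms(4)]
  have "\<exists>z. good_basis x1 x2 z" by (rule exists_z[OF lx1 lx2 T(2)]) (use T(3) in blast)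
  then obtain z where gb: "good_basis x1 x2 z" by blast
  define d where "d = det3 x1 x2 z"
  have d: "d \<noteq> 0" and lz: "lattice_pt z"
    and I: "\<And>p. lattice_pt p \<Longrightarrow> det3 p x2 z / d \<in> \<int> \<and> det3 x1 p z / d \<in> \<int> \<and> det3 x1 x2 p / d \<in> \<int>"
    using gb by (auto simp: good_basis_def d_def)
  obtain a b c :: int where y1e: "y1 = of_int a *\<^sub>R x1 + of_int b *\<^sub>R x2 + of_int c *\<^sub>R z"
  proof -
    from I[OF ly1] obtain a b c :: int where "det3 y1 x2 z / d = of_int a" "det3 x1 y1 z / d = of_int b"
        "det3 x1 x2 y1 / d = of_int c" by (metis Ints_cases)
    moreover have "y1 = (det3 y1 x2 z / d) *\<^sub>R x1 + (det3 x1 y1 z / d) *\<^sub>R x2 + (det3 x1 x2 y1 / d) *\<^sub>R z"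
      unfolding d_def by (rule cramer) (use d d_def in simp)
    ultimately show ?thesis using that by simp
  qed
  have dy1: "det3 x1 x2 y1 = of_int c * d" unfolding y1e d_def by (simp add: det3_def algebra_simps)
  have c0: "c \<noteq> 0"
  proof
    assume "c = 0"
    have "{x1,x2,x3,y1,-y1} \<subseteq> {p. det3 x1 x2 p = 0}"
      using dy1 \<open>c = 0\<close> by (auto simp: T(1) det3_def algebra_simps)
    then have Psub: "P \<subseteq> {p. det3 x1 x2 p = 0}" unfolding P0 by (rule hull_minimal) (rule convex_hyp)
    obtain e where e: "e > 0" "ball 0 e \<subseteq> P" using int0 mem_interior by blast
    have "z \<noteq> 0" using d unfolding d_def by (auto simp: det3_def)
    then have nz: "norm z > 0" by simp
    define q where "q = (e / (2 * norm z)) *\<^sub>R z"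
    have "norm q = e/2" using nz e by (simp add: q_def)
    then have "q \<in> ball 0 e" using e by simp
    then have "det3 x1 x2 q = 0" using e Psub by auto
    moreover have "det3 x1 x2 q = (e / (2 * norm z)) * d" unfolding q_def d_def
      by (simp add: det3_def algebra_simps)
    ultimately show False using d e nz by simp
  qed
  obtain ai bi ci :: int and y where ci: "ci > 0"
    and ye: "y = of_int ai *\<^sub>R x1 + of_int bi *\<^sub>R x2 + of_int ci *\<^sub>R z"
    and Vset: "{x1,x2,x3,y1,-y1} = {x1,x2,x3,y,-y}"
  proof (cases "c > 0")
    case True
    then show ?thesis using that[where ai=a and bi=b and ci=c and y=y1] y1e by simp
  next
    case False
    then have "-c > 0" using c0 by simp
    moreover have "-y1 = of_int (-a) *\<^sub>R x1 + of_int (-b) *\<^sub>R x2 + of_int (-c) *\<^sub>R z"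
      using y1e by (simp add: algebra_simps)
    moreover have "{x1,x2,x3,y1,-y1} = {x1,x2,x3,-y1,- (-y1)}" by (auto simp: insert_commute)
    ultimately show ?thesis using that[where ai="-a" and bi="-b" and ci="-c" and y="-y1"] by blast
  qed
  have P: "P = convex hull {x1,x2,x3,y,-y}" using P0 Vset by simp
  have LP: "\<And>p. lattice_pt p \<Longrightarrow> p \<in> P \<Longrightarrow> p \<in> {0,x1,x2,x3,y,-y}" using LP0 Vset by blast
  have dy: "det3 x1 x2 y = of_int ci * d" unfolding ye d_def by (simp add: det3_def algebra_simps)
  have K: False if h0: "0 < \<bar>ga\<bar>" and h1: "\<bar>ga\<bar> < ci" and hS: "S = ci*al - ga*ai" and hT: "T = ci*be - ga*bi"
      and i1: "S + T \<le> ci - \<bar>ga\<bar>" and i2: "2*S - T \<ge> -(ci - \<bar>ga\<bar>)" and i3: "S - 2*T \<le> ci - \<bar>ga\<bar>"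
    for al be ga S T :: int
  proof -
    define p where "p = of_int al *\<^sub>R x1 + of_int be *\<^sub>R x2 + of_int ga *\<^sub>R z"
    have lp: "lattice_pt p" unfolding p_def by (rule lattice_comb3[OF lx1 lx2 lz]) simp_all
    have cr: "(real_of_int ci) > 0" using ci by simp
    have rS: "real_of_int S = of_int ci * of_int al - of_int ga * of_int ai" using hS by simp
    have rT: "real_of_int T = of_int ci * of_int be - of_int ga * of_int bi" using hT by simp
    have "(of_int S / of_int ci) *\<^sub>R x1 + (of_int T / of_int ci) *\<^sub>R x2 + (of_int ga / of_int ci) *\<^sub>R y
        = (of_int S / of_int ci + of_int ga / of_int ci * of_int ai) *\<^sub>R x1
          + (of_int T / of_int ci + of_int ga / of_int ci * of_int bi) *\<^sub>R x2
          + (of_int ga / of_int ci * of_int ci) *\<^sub>R z"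
      unfolding ye by (simp add: algebra_simps)
    also have "\<dots> = p" unfolding p_def using cr rS rT by (simp add: field_simps)
    finally have pe: "p = (of_int S / of_int ci) *\<^sub>R x1 + (of_int T / of_int ci) *\<^sub>R x2 + (of_int ga / of_int ci) *\<^sub>R y" ..
    have ab: "\<bar>real_of_int ga / of_int ci\<bar> = \<bar>of_int ga\<bar> / of_int ci" using cr by simp
    have r1: "real_of_int S + of_int T \<le> of_int ci - \<bar>of_int ga\<bar>" using i1 by linarith
    have r2: "2 * real_of_int S - of_int T \<ge> - (of_int ci - \<bar>of_int ga\<bar>)" using i2 by linarith
    have r3: "real_of_int S - 2 * of_int T \<le> of_int ci - \<bar>of_int ga\<bar>" using i3 by linarith
    have inP: "p \<in> P" unfolding pe P
    proof (rule memP[OF convex_convex_hull])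
      show "x1 \<in> convex hull {x1, x2, x3, y, - y}" "x2 \<in> convex hull {x1, x2, x3, y, - y}"
        "-x1-x2 \<in> convex hull {x1, x2, x3, y, - y}" "y \<in> convex hull {x1, x2, x3, y, - y}"
        "-y \<in> convex hull {x1, x2, x3, y, - y}" using T(1) by (auto intro: hull_inc)
      show "real_of_int S / of_int ci + of_int T / of_int ci \<le> 1 - \<bar>of_int ga / of_int ci\<bar>"
      proof -
        have "(real_of_int S + of_int T)/of_int ci \<le> (of_int ci - \<bar>of_int ga\<bar>)/of_int ci"
          using r1 cr by (simp add: divide_right_mono)
        then show ?thesis unfolding ab using cr by (simp add: add_divide_distrib diff_divide_distrib)
      qed
      show "2 * (real_of_int S / of_int ci) - of_int T / of_int ci \<ge> - (1 - \<bar>of_int ga / of_int ci\<bar>)"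
      proof -
        have "(2 * real_of_int S - of_int T)/of_int ci \<ge> (- (of_int ci - \<bar>of_int ga\<bar>))/of_int ci"
          using r2 cr by (simp add: divide_right_mono)
        then show ?thesis unfolding ab using cr by (simp add: add_divide_distrib diff_divide_distrib)
      qed
      show "real_of_int S / of_int ci - 2 * (of_int T / of_int ci) \<le> 1 - \<bar>of_int ga / of_int ci\<bar>"
      proof -
        have "(real_of_int S - 2 * of_int T)/of_int ci \<le> (of_int ci - \<bar>of_int ga\<bar>)/of_int ci"
          using r3 cr by (simp add: divide_right_mono)
        then show ?thesis unfolding ab using cr by (simp add: add_divide_distrib diff_divide_distrib)
      qed
    qed
    have dp: "det3 x1 x2 p = of_int ga * d" unfolding p_def d_def by (simp add: det3_def algebra_simps)
    have "p \<in> {0,x1,x2,x3,y,-y}" using LP[OF lp inP] .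
    moreover have "det3 x1 x2 0 = 0" "det3 x1 x2 x1 = 0" "det3 x1 x2 x2 = 0" "det3 x1 x2 x3 = 0"
      "det3 x1 x2 (-y) = - (of_int ci * d)"
      using dy by (simp_all add: T(1) det3_def algebra_simps)
    ultimately have "of_int ga * d \<in> {0, of_int ci * d, - (of_int ci * d)}" using dp dy by auto
    then have "real_of_int ga * d = 0 * d \<or> real_of_int ga * d = of_int ci * d \<or> real_of_int ga * d = (- of_int ci) * d"
      by auto
    then have "real_of_int ga \<in> {0, of_int ci, - of_int ci}" using d by (simp only: mult_cancel_right) auto
    then have "ga \<in> {0, ci, -ci}" by auto
    then show False using h0 h1 by auto
  qed
  have core: "ci = 1 \<or> (ci = 3 \<and> ((ai mod 3 = 1 \<and> bi mod 3 = 2) \<or> (ai mod 3 = 2 \<and> bi mod 3 = 1)))"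
  proof (cases "ci = 1")
    case True then show ?thesis by simp
  next
    case False then have "ci \<ge> 2" using ci by linarith
    have "ci = 3 \<and> ((ai mod 3 = 1 \<and> bi mod 3 = 2) \<or> (ai mod 3 = 2 \<and> bi mod 3 = 1))"
      by (rule int_core[where a=ai and b=bi and c=ci, OF \<open>ci \<ge> 2\<close>]) (rule K; assumption)
    then show ?thesis by simp
  qed
  define E1 :: "real^3" where "E1 = vector [1,0,0]"
  define E2 :: "real^3" where "E2 = vector [0,1,0]"
  define E3 :: "real^3" where "E3 = vector [0,0,1]"
  have vv: "- E1 - E2 = vector [-1,-1,0]" "- E2 - E1 = vector [-1,-1,0]" "- E3 = vector [0,0,-1]"
    "1 *\<^sub>R E1 + 2 *\<^sub>R E2 + 3 *\<^sub>R E3 = vector [1,2,3]"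
    "2 *\<^sub>R E2 + 1 *\<^sub>R E1 + 3 *\<^sub>R E3 = vector [1,2,3]"
    "- vector [1,2,3] = (vector [-1,-2,-3] :: real^3)"
    by (simp_all add: E1_def E2_def E3_def vec_eq_iff forall_3)
  have P': "P = convex hull {x1,x2,-x1-x2,y,-y}" using P T(1) by simp
  from core show ?thesis
  proof (elim disjE conjE)
    assume "ci = 1"
    have "good_basis x1 x2 (of_int ai *\<^sub>R x1 + of_int bi *\<^sub>R x2 + z)"
      by (rule good_basis_shear[OF gb]) simp_all
    moreover have "of_int ai *\<^sub>R x1 + of_int bi *\<^sub>R x2 + z = y" using ye \<open>ci = 1\<close> by simp
    ultimately have "good_basis x1 x2 y" by simp
    then obtain M where M: "M \<in> GL3Z" "M *v x1 = E1" "M *v x2 = E2" "M *v y = E3"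
      using good_basis_M unfolding E1_def E2_def E3_def by blast
    have "(\<lambda>x. M *v x) ` P = convex hull {E1, E2, -E1-E2, E3, -E3}"
      by (rule final_img[OF P' M(2-4)])
    then show ?thesis using M(1) vv unfolding E1_def E2_def E3_def by auto
  next
    assume c3: "ci = 3" and ra: "ai mod 3 = 1" and rb: "bi mod 3 = 2"
    define ka where "ka = (ai - 1) div 3"
    define kb where "kb = (bi - 2) div 3"
    have "ai = 3 * ka + 1" "bi = 3 * kb + 2" using ra rb unfolding ka_def kb_def by presburger+
    then have rai: "real_of_int ai = 3 * of_int ka + 1" and rbi: "real_of_int bi = 3 * of_int kb + 2"
      by simp_all
    define w where "w = of_int ka *\<^sub>R x1 + of_int kb *\<^sub>R x2 + z"
    have gw: "good_basis x1 x2 w" unfolding w_def by (rule good_basis_shear[OF gb]) simp_all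
    have yw: "y = 1 *\<^sub>R x1 + 2 *\<^sub>R x2 + 3 *\<^sub>R w"
      unfolding ye w_def c3 using rai rbi by (simp add: algebra_simps)
    obtain M where M: "M \<in> GL3Z" "M *v x1 = E1" "M *v x2 = E2" "M *v w = E3"
      using good_basis_M[OF gw] unfolding E1_def E2_def E3_def by blast
    have My: "M *v y = vector [1,2,3]" unfolding yw Mlin M(2-4) vv by simp
    have "(\<lambda>x. M *v x) ` P = convex hull {E1, E2, -E1-E2, vector [1,2,3], - vector [1,2,3]}"
      by (rule final_img[OF P' M(2,3) My])
    then show ?thesis using M(1) vv unfolding E1_def E2_def E3_def by auto
  next
    assume c3: "ci = 3" and ra: "ai mod 3 = 2" and rb: "bi mod 3 = 1"
    define ka where "ka = (ai - 2) div 3"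
    define kb where "kb = (bi - 1) div 3"
    have "ai = 3 * ka + 2" "bi = 3 * kb + 1" using ra rb unfolding ka_def kb_def by presburger+
    then have rai: "real_of_int ai = 3 * of_int ka + 2" and rbi: "real_of_int bi = 3 * of_int kb + 1"
      by simp_all
    define w where "w = of_int ka *\<^sub>R x1 + of_int kb *\<^sub>R x2 + z"
    have gw: "good_basis x2 x1 w" unfolding w_def
      by (rule good_basis_swap, rule good_basis_shear[OF gb]) simp_all
    have yw: "y = 2 *\<^sub>R x1 + 1 *\<^sub>R x2 + 3 *\<^sub>R w"
      unfolding ye w_def c3 using rai rbi by (simp add: algebra_simps)
    obtain M where M: "M \<in> GL3Z" "M *v x2 = E1" "M *v x1 = E2" "M *v w = E3"
      using good_basis_M[OF gw] unfolding E1_def E2_def E3_def by blast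
    have My: "M *v y = vector [1,2,3]" unfolding yw Mlin M(2-4) vv(5)[symmetric] by (simp add: algebra_simps)
    have m21: "-x2-x1 = -x1-x2" by (simp add: algebra_simps)
    have "{x2,x1,-x2-x1,y,-y} = {x1,x2,-x1-x2,y,-y}" unfolding m21 by auto
    then have P'': "P = convex hull {x2,x1,-x2-x1,y,-y}" using P' by simp
    have "(\<lambda>x. M *v x) ` P = convex hull {E1, E2, -E1-E2, vector [1,2,3], - vector [1,2,3]}"
      by (rule final_img[OF P'' M(2,3) My])
    then show ?thesis using M(1) vv unfolding E1_def E2_def E3_def by auto
  qed
qed

end
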